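(* Let $p$ be a prime, $\alpha$ a positive integer, and $n,k,m$ nonnegative integers with $k\le n$. Suppose that $u_1,\dots,u_{n-k}\in\mathbb{Z}^n$ and $v_1,\dots,v_m\in\mathbb{Z}^n$ satisfy \begin{align*} u_i\cdot u_i&\not\equiv 0\pmod{p^\alpha}\ \text{for all } i,\\ u_i\cdot u_j&\equiv 0\pmod{p^\alpha}\ \text{for all } i\neq j,\\ v_i\cdot v_j&\equiv 0\pmod{p^\alpha}\ \text{for all } i,j,\\ u_i\cdot v_j&\equiv 0\pmod{p^\alpha}\ \text{for all } i,j. \end{align*} Then the subspace of $\mathbb{F}_p^n$ spanned by $v_1\bmod p,\dots,v_m\bmod p$ has dimension at most $k/2$.
   Context: Here $x\cdot y=\sum_t x^{(t)}y^{(t)}$ denotes the standard integer dot product on $\mathbb{Z}^n$, and $v\bmod p$ denotes the coordinatewise reduction into $\mathbb{F}_p^n$. *)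

theory Defs
  imports Main "HOL-Library.Function_Algebras" "Berlekamp_Zassenhaus.Finite_Field"
begin

text \<open>Vectors of Z^n are represented as functions nat => int, only coordinates t < n matter.\<close>

definition idot :: "nat \<Rightarrow> (nat \<Rightarrow> int) \<Rightarrow> (nat \<Rightarrow> int) \<Rightarrow> int" where
  "idot n x y = (\<Sum>t<n. x t * y t)"

text \<open>Coordinatewise reduction into F_p^n, where F_p is the type 'p mod_ring with CARD('p) = p;
  coordinates t >= n are set to 0 so the result lives in a copy of F_p^n.\<close>

definition red_mod :: "nat \<Rightarrow> (nat \<Rightarrow> int) \<Rightarrow> (nat \<Rightarrow> 'p::prime_card mod_ring)" where
  "red_mod n v = (\<lambda>t. if t < n then of_int (v t) else 0)"

definition fscale :: "'a::field \<Rightarrow> (nat \<Rightarrow> 'a) \<Rightarrow> (nat \<Rightarrow> 'a)" where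
  "fscale c x = (\<lambda>t. c * x t)"

end

theory Submission
  imports Defs
begin


lemma idot_comm: "idot n x y = idot n y x"
  unfolding idot_def by (simp add: mult.commute)

lemma idot_sum_left: "idot n (\<lambda>t. \<Sum>i\<in>I. a i * w i t) y = (\<Sum>i\<in>I. a i * idot n (w i) y)"
proof -
  have "idot n (\<lambda>t. \<Sum>i\<in>I. a i * w i t) y = (\<Sum>t<n. \<Sum>i\<in>I. a i * (w i t * y t))"
    unfolding idot_def by (simp add: sum_distrib_right mult.assoc)
  also have "\<dots> = (\<Sum>i\<in>I. \<Sum>t<n. a i * (w i t * y t))" by (rule sum.swap)
  also have "\<dots> = (\<Sum>i\<in>I. a i * idot n (w i) y)"
    unfolding idot_def by (simp add: sum_distrib_left)
  finally show ?thesis .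
qed

lemma idot_add3: "idot n (\<lambda>t. f t + g t + h t) y = idot n f y + idot n g y + idot n h y"
  unfolding idot_def by (simp add: distrib_right sum.distrib)

lemma idot_zero: "(\<And>t. t < n \<Longrightarrow> x t = 0) \<Longrightarrow> idot n x y = 0"
  unfolding idot_def by simp

lemma delta_sum:
  fixes q :: int and d m :: nat
  assumes "\<And>l. l < d \<Longrightarrow> q dvd P l - (if l = m then 1 else 0)" and "m < d"
  shows "q dvd (\<Sum>l<d. c l * P l) - c m"
proof -
  have "(\<Sum>l<d. c l * (if l = m then 1 else 0)) = (\<Sum>l<d. if l = m then c l else 0)"
    by (rule sum.cong) auto
  also have "\<dots> = c m" using assms(2) by (subst sum.delta) auto
  finally have dd: "(\<Sum>l<d. c l * (if l = m then 1 else 0)) = c m" .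
  then have "(\<Sum>l<d. c l * P l) - c m = (\<Sum>l<d. c l * (P l - (if l = m then 1 else 0)))"
    by (simp add: sum_subtractf right_diff_distrib dd)
  also have "q dvd \<dots>" using assms(1) by (intro dvd_sum) auto
  finally show ?thesis .
qed

lemma lemmaC:
  fixes q :: int and d :: nat
  assumes q: "q \<noteq> 0"
    and P: "\<And>l m. l < d \<Longrightarrow> m < d \<Longrightarrow> q dvd P l m - (if l = m then 1 else 0)"
  shows "(\<And>m. m < d \<Longrightarrow> q ^ k dvd (\<Sum>l<d. c l * P l m)) \<Longrightarrow> l < d \<Longrightarrow> q ^ k dvd c l"
proof (induction k arbitrary: c l)
  case 0
  then show ?case by simp
next
  case (Suc k)
  have qc: "q dvd c m" if "m < d" for m
  proof -
    have "q dvd (\<Sum>l<d. c l * P l m)"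
      using Suc.prems(1)[OF that] by (metis dvd_mult_left power_Suc)
    moreover have "q dvd (\<Sum>l<d. c l * P l m) - c m"
      using delta_sum[of d q "\<lambda>l. P l m" m c] P that by auto
    ultimately have "q dvd (\<Sum>l<d. c l * P l m) - ((\<Sum>l<d. c l * P l m) - c m)"
      by (rule dvd_diff)
    then show ?thesis by simp
  qed
  define c' where "c' l = c l div q" for l
  have cc: "c l = q * c' l" if "l < d" for l
    using qc[OF that] unfolding c'_def by simp
  have "q ^ k dvd (\<Sum>l<d. c' l * P l m)" if "m < d" for m
  proof -
    have "(\<Sum>l<d. c l * P l m) = q * (\<Sum>l<d. c' l * P l m)"
      by (simp add: sum_distrib_left cc mult.assoc)
    then show ?thesis using Suc.prems(1)[OF that] q by (simp add: power_Suc)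
  qed
  then have "q ^ k dvd c' l" using Suc.IH Suc.prems(2) by blast
  then show ?case using cc[OF Suc.prems(2)] by (simp add: power_Suc)
qed




lemma lemmaB:
  fixes p :: nat and \<alpha> n r d :: nat and u V Z :: "nat \<Rightarrow> nat \<Rightarrow> int" and a b c :: "nat \<Rightarrow> int"
  assumes pr: "prime p" and al: "\<alpha> > 0"
    and hu: "\<And>i. i < r \<Longrightarrow> \<not> int p ^ \<alpha> dvd idot n (u i) (u i)"
    and huu: "\<And>i j. i < r \<Longrightarrow> j < r \<Longrightarrow> i \<noteq> j \<Longrightarrow> int p ^ \<alpha> dvd idot n (u i) (u j)"
    and hvv: "\<And>i j. i < d \<Longrightarrow> j < d \<Longrightarrow> int p ^ \<alpha> dvd idot n (V i) (V j)"
    and huv: "\<And>i j. i < r \<Longrightarrow> j < d \<Longrightarrow> int p ^ \<alpha> dvd idot n (u i) (V j)"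
    and hvz: "\<And>j l. j < d \<Longrightarrow> l < d \<Longrightarrow> int p dvd idot n (V j) (Z l) - (if j = l then 1 else 0)"
    and rel: "\<And>t. t < n \<Longrightarrow> (\<Sum>i<r. a i * u i t) + (\<Sum>j<d. b j * V j t) + (\<Sum>l<d. c l * Z l t) = 0"
  shows "(\<forall>i<r. int p dvd a i) \<and> (\<forall>j<d. int p dvd b j) \<and> (\<forall>l<d. int p ^ \<alpha> dvd c l)"
proof -
  define q where "q = int p"
  have q0: "q \<noteq> 0" using pr q_def by auto
  have qpr: "prime q" using pr q_def by simp
  have dot: "(\<Sum>i<r. a i * idot n (u i) y) + (\<Sum>j<d. b j * idot n (V j) y) + (\<Sum>l<d. c l * idot n (Z l) y) = 0" for y
  proof -
    have "idot n (\<lambda>t. (\<Sum>i<r. a i * u i t) + (\<Sum>j<d. b j * V j t) + (\<Sum>l<d. c l * Z l t)) y = 0"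
      by (rule idot_zero) (rule rel)
    then show ?thesis by (simp only: idot_add3 idot_sum_left)
  qed
  have hc: "q ^ \<alpha> dvd c l" if "l < d" for l
  proof (rule lemmaC[of q d "\<lambda>l m. idot n (Z l) (V m)"])
    show "q \<noteq> 0" by (rule q0)
    show "q dvd idot n (Z l) (V m) - (if l = m then 1 else 0)" if "l < d" "m < d" for l m
      using hvz[OF that(2) that(1)] by (simp add: q_def idot_comm eq_commute)
    show "q ^ \<alpha> dvd (\<Sum>l<d. c l * idot n (Z l) (V m))" if "m < d" for m
    proof -
      have A: "q ^ \<alpha> dvd (\<Sum>i<r. a i * idot n (u i) (V m))"
        using huv that by (intro dvd_sum) (simp add: q_def)
      have B: "q ^ \<alpha> dvd (\<Sum>j<d. b j * idot n (V j) (V m))"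
        using hvv that by (intro dvd_sum) (simp add: q_def)
      have "(\<Sum>l<d. c l * idot n (Z l) (V m)) = - ((\<Sum>i<r. a i * idot n (u i) (V m)) + (\<Sum>j<d. b j * idot n (V j) (V m)))"
        using dot[of "V m"] by linarith
      then show ?thesis using A B by simp
    qed
    show "l < d" by (rule that)
  qed
  have ha: "q dvd a m" if "m < r" for m
  proof -
    have A: "q ^ \<alpha> dvd (\<Sum>i\<in>{..<r}-{m}. a i * idot n (u i) (u m))"
      using huu that by (intro dvd_sum) (simp add: q_def)
    have B: "q ^ \<alpha> dvd (\<Sum>j<d. b j * idot n (V j) (u m))"
      using huv that by (intro dvd_sum) (simp add: q_def idot_comm)
    have C: "q ^ \<alpha> dvd (\<Sum>l<d. c l * idot n (Z l) (u m))"
      using hc by (intro dvd_sum) simp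
    have split: "(\<Sum>i<r. a i * idot n (u i) (u m)) = a m * idot n (u m) (u m) + (\<Sum>i\<in>{..<r}-{m}. a i * idot n (u i) (u m))"
      using that by (subst sum.remove[of _ m]) auto
    have "a m * idot n (u m) (u m) = - ((\<Sum>i\<in>{..<r}-{m}. a i * idot n (u i) (u m)) + (\<Sum>j<d. b j * idot n (V j) (u m)) + (\<Sum>l<d. c l * idot n (Z l) (u m)))"
      using dot[of "u m"] split by linarith
    then have D: "q ^ \<alpha> dvd a m * idot n (u m) (u m)" using A B C by simp
    show ?thesis
    proof (rule ccontr)
      assume "\<not> q dvd a m"
      then have "coprime q (a m)" using qpr by (simp add: prime_imp_coprime)
      then have "coprime (q ^ \<alpha>) (a m)" by simp
      then have "q ^ \<alpha> dvd idot n (u m) (u m)" using D by (simp add: coprime_dvd_mult_right_iff)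
      then show False using hu[OF that] by (simp add: q_def)
    qed
  qed
  have hb: "q dvd b m" if "m < d" for m
  proof -
    have A: "q dvd (\<Sum>i<r. a i * idot n (u i) (Z m))"
      using ha by (intro dvd_sum) simp
    have C: "q dvd (\<Sum>l<d. c l * idot n (Z l) (Z m))"
    proof (intro dvd_sum)
      fix l assume "l \<in> {..<d}"
      then have "q ^ \<alpha> dvd c l" using hc by simp
      then have "q dvd c l" using al by (meson dvd_power dvd_trans)
      then show "q dvd c l * idot n (Z l) (Z m)" by simp
    qed
    have "(\<Sum>j<d. b j * idot n (V j) (Z m)) = - ((\<Sum>i<r. a i * idot n (u i) (Z m)) + (\<Sum>l<d. c l * idot n (Z l) (Z m)))"
      using dot[of "Z m"] by linarith
    then have B: "q dvd (\<Sum>j<d. b j * idot n (V j) (Z m))" using A C by simp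
    have "q dvd (\<Sum>j<d. b j * idot n (V j) (Z m)) - b m"
      using delta_sum[of d q "\<lambda>j. idot n (V j) (Z m)" m b] hvz that by (simp add: q_def)
    then have "q dvd (\<Sum>j<d. b j * idot n (V j) (Z m)) - ((\<Sum>j<d. b j * idot n (V j) (Z m)) - b m)"
      using B by (rule dvd_diff[rotated])
    moreover have "(\<Sum>j<d. b j * idot n (V j) (Z m)) - ((\<Sum>j<d. b j * idot n (V j) (Z m)) - b m) = b m"
      by simp
    ultimately show ?thesis by metis
  qed
  show ?thesis using ha hb hc q_def by auto
qed




lemma all_pow_dvd_zero:
  fixes q x :: int
  assumes "q \<ge> 2" "\<And>s. q ^ s dvd x"
  shows "x = 0"
proof (rule ccontr)
  assume x: "x \<noteq> 0"
  define s where "s = nat \<bar>x\<bar>"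
  have "\<bar>q ^ s\<bar> \<le> \<bar>x\<bar>" using dvd_imp_le_int[OF x assms(2)[of s]] .
  moreover have "int s < 2 ^ s" using less_exp[of s] by (metis of_nat_less_iff of_nat_numeral of_nat_power)
  moreover have "(2::int) ^ s \<le> q ^ s" using assms(1) by (intro power_mono) auto
  ultimately show False unfolding s_def using assms(1) by auto
qed

lemma lemmaA:
  fixes p :: nat and \<alpha> n r d :: nat and u V Z :: "nat \<Rightarrow> nat \<Rightarrow> int"
  assumes pr: "prime p" and al: "\<alpha> > 0"
    and hu: "\<And>i. i < r \<Longrightarrow> \<not> int p ^ \<alpha> dvd idot n (u i) (u i)"
    and huu: "\<And>i j. i < r \<Longrightarrow> j < r \<Longrightarrow> i \<noteq> j \<Longrightarrow> int p ^ \<alpha> dvd idot n (u i) (u j)"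
    and hvv: "\<And>i j. i < d \<Longrightarrow> j < d \<Longrightarrow> int p ^ \<alpha> dvd idot n (V i) (V j)"
    and huv: "\<And>i j. i < r \<Longrightarrow> j < d \<Longrightarrow> int p ^ \<alpha> dvd idot n (u i) (V j)"
    and hvz: "\<And>j l. j < d \<Longrightarrow> l < d \<Longrightarrow> int p dvd idot n (V j) (Z l) - (if j = l then 1 else 0)"
  shows "\<forall>a b c. (\<forall>t<n. (\<Sum>i<r. a i * u i t) + (\<Sum>j<d. b j * V j t) + (\<Sum>l<d. c l * Z l t) = 0) \<longrightarrow>
     (\<forall>i<r. a i = 0) \<and> (\<forall>j<d. b j = 0) \<and> (\<forall>l<d. c l = 0)"
proof (intro allI impI)
  fix a b c :: "nat \<Rightarrow> int"
  assume rel0: "\<forall>t<n. (\<Sum>i<r. a i * u i t) + (\<Sum>j<d. b j * V j t) + (\<Sum>l<d. c l * Z l t) = 0"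
  define q where "q = int p"
  have q2: "q \<ge> 2" using pr q_def prime_ge_2_nat by auto
  have pow: "(\<forall>i<r. q ^ s dvd a i) \<and> (\<forall>j<d. q ^ s dvd b j) \<and> (\<forall>l<d. q ^ s dvd c l)"
    if "\<forall>t<n. (\<Sum>i<r. a i * u i t) + (\<Sum>j<d. b j * V j t) + (\<Sum>l<d. c l * Z l t) = 0" for s a b c
    using that
  proof (induction s arbitrary: a b c)
    case 0
    then show ?case by simp
  next
    case (Suc s)
    have B: "(\<forall>i<r. q dvd a i) \<and> (\<forall>j<d. q dvd b j) \<and> (\<forall>l<d. q ^ \<alpha> dvd c l)"
      unfolding q_def by (rule lemmaB[OF pr al hu huu hvv huv hvz]) (use Suc.prems in auto)
    have Bc: "q dvd c l" if "l < d" for l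
      using B that al by (meson dvd_power dvd_trans)
    define a' where "a' i = a i div q" for i
    define b' where "b' i = b i div q" for i
    define c' where "c' i = c i div q" for i
    have aa: "a i = q * a' i" if "i < r" for i using B that unfolding a'_def by simp
    have bb: "b i = q * b' i" if "i < d" for i using B that unfolding b'_def by simp
    have cc: "c i = q * c' i" if "i < d" for i using Bc that unfolding c'_def by simp
    have rel': "\<forall>t<n. (\<Sum>i<r. a' i * u i t) + (\<Sum>j<d. b' j * V j t) + (\<Sum>l<d. c' l * Z l t) = 0"
    proof (intro allI impI)
      fix t assume t: "t < n"
      have "q * ((\<Sum>i<r. a' i * u i t) + (\<Sum>j<d. b' j * V j t) + (\<Sum>l<d. c' l * Z l t))
          = (\<Sum>i<r. a i * u i t) + (\<Sum>j<d. b j * V j t) + (\<Sum>l<d. c l * Z l t)"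
        by (simp add: distrib_left sum_distrib_left aa bb cc mult.assoc)
      also have "\<dots> = 0" using Suc.prems t by auto
      finally show "(\<Sum>i<r. a' i * u i t) + (\<Sum>j<d. b' j * V j t) + (\<Sum>l<d. c' l * Z l t) = 0"
        using q2 by simp
    qed
    from Suc.IH[OF rel'] show ?case using aa bb cc by (auto simp: power_Suc)
  qed
  show "(\<forall>i<r. a i = 0) \<and> (\<forall>j<d. b j = 0) \<and> (\<forall>l<d. c l = 0)"
    using pow[OF rel0] all_pow_dvd_zero[OF q2] by meson
qed

lemma elim_rel:
  fixes w :: "'a \<Rightarrow> nat \<Rightarrow> int"
  assumes "finite I" "n < card I"
  shows "\<exists>a. (\<exists>i\<in>I. a i \<noteq> 0) \<and> (\<forall>t<n. (\<Sum>i\<in>I. a i * w i t) = 0)"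
  using assms
proof (induction n arbitrary: I w)
  case 0
  then obtain i where "i \<in> I" by fastforce
  then show ?case by (intro exI[of _ "\<lambda>_. 1"]) auto
next
  case (Suc n)
  show ?case
  proof (cases "\<forall>i\<in>I. w i n = 0")
    case True
    obtain a where a: "\<exists>i\<in>I. a i \<noteq> 0" "\<forall>t<n. (\<Sum>i\<in>I. a i * w i t) = 0"
      using Suc.IH[of I w] Suc.prems by auto
    show ?thesis
    proof (intro exI[of _ a] conjI allI impI)
      show "\<exists>i\<in>I. a i \<noteq> 0" by (rule a(1))
      fix t assume "t < Suc n"
      then consider "t < n" | "t = n" by linarith
      then show "(\<Sum>i\<in>I. a i * w i t) = 0" using a(2) True by cases auto
    qed
  next
    case False
    then obtain i0 where i0: "i0 \<in> I" "w i0 n \<noteq> 0" by auto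
    define J where "J = I - {i0}"
    define w' where "w' i t = w i0 n * w i t - w i n * w i0 t" for i t
    have fJ: "finite J" using Suc.prems J_def by auto
    have cJ: "n < card J" using Suc.prems i0 J_def by auto
    obtain a' where a': "\<exists>i\<in>J. a' i \<noteq> 0" "\<forall>t<n. (\<Sum>i\<in>J. a' i * w' i t) = 0"
      using Suc.IH[OF fJ cJ] by blast
    define a where "a i = (if i = i0 then - (\<Sum>j\<in>J. a' j * w j n) else a' i * w i0 n)" for i
    have key: "(\<Sum>i\<in>I. a i * w i t) = (\<Sum>j\<in>J. a' j * w' j t)" for t
    proof -
      have "(\<Sum>i\<in>I. a i * w i t) = a i0 * w i0 t + (\<Sum>j\<in>J. a j * w j t)"
        unfolding J_def using i0 Suc.prems(1) by (subst sum.remove[of _ i0]) auto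
      also have "(\<Sum>j\<in>J. a j * w j t) = (\<Sum>j\<in>J. a' j * w i0 n * w j t)"
        by (rule sum.cong) (auto simp: a_def J_def)
      also have "a i0 * w i0 t = - (\<Sum>j\<in>J. a' j * w j n * w i0 t)"
        by (simp add: a_def sum_distrib_right)
      finally show ?thesis
        by (simp add: w'_def right_diff_distrib sum_subtractf algebra_simps)
    qed
    show ?thesis
    proof (intro exI[of _ a] conjI allI impI)
      obtain j where j: "j \<in> J" "a' j \<noteq> 0" using a'(1) by blast
      then have "a j \<noteq> 0" using i0 by (auto simp: a_def J_def)
      then show "\<exists>i\<in>I. a i \<noteq> 0" using j J_def by auto
      fix t assume "t < Suc n"
      then consider "t < n" | "t = n" by linarith
      then show "(\<Sum>i\<in>I. a i * w i t) = 0"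
      proof cases
        case 1 then show ?thesis using key a'(2) by simp
      next
        case 2 then show ?thesis unfolding key by (simp add: w'_def mult.commute)
      qed
    qed
  qed
qed




interpretation fs: vector_space "fscale :: 'a::field \<Rightarrow> (nat \<Rightarrow> 'a) \<Rightarrow> _"
  by unfold_locales (auto simp: fscale_def algebra_simps)

definition fdot :: "nat \<Rightarrow> (nat \<Rightarrow> 'a::field) \<Rightarrow> (nat \<Rightarrow> 'a) \<Rightarrow> 'a" where
  "fdot n x y = (\<Sum>t<n. x t * y t)"

lemma sum_fun_apply: "(sum f A) t = (\<Sum>a\<in>A. f a t)"
  by (induction A rule: infinite_finite_induct) auto

lemma fdot_lin_sum: "fdot n x (\<lambda>s. f s - (\<Sum>y\<in>B. c y * g y s)) = fdot n x f - (\<Sum>y\<in>B. c y * fdot n x (g y))"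
proof -
  have "fdot n x (\<lambda>s. f s - (\<Sum>y\<in>B. c y * g y s)) = fdot n x f - (\<Sum>t<n. \<Sum>y\<in>B. x t * (c y * g y t))"
    unfolding fdot_def by (simp add: right_diff_distrib sum_subtractf sum_distrib_left)
  also have "(\<Sum>t<n. \<Sum>y\<in>B. x t * (c y * g y t)) = (\<Sum>y\<in>B. \<Sum>t<n. x t * (c y * g y t))"
    by (rule sum.swap)
  also have "\<dots> = (\<Sum>y\<in>B. c y * fdot n x (g y))"
    unfolding fdot_def by (simp add: sum_distrib_left algebra_simps)
  finally show ?thesis .
qed

lemma fdot_lin1: "fdot n x (\<lambda>s. f s - c * g s) = fdot n x f - c * fdot n x g"
  unfolding fdot_def by (simp add: right_diff_distrib sum_subtractf sum_distrib_left algebra_simps)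

lemma sum_delta_B: "finite B \<Longrightarrow> x \<in> B \<Longrightarrow> (\<Sum>y\<in>B. f y * (if x = y then 1 else 0)) = (f x :: 'a::field)"
proof -
  assume "finite B" "x \<in> B"
  have "(\<Sum>y\<in>B. f y * (if x = y then 1 else 0)) = (\<Sum>y\<in>B. if y = x then f y else 0)"
    by (rule sum.cong) auto
  also have "\<dots> = f x" using \<open>finite B\<close> \<open>x \<in> B\<close> by (subst sum.delta) auto
  finally show ?thesis .
qed

lemma dual_basis:
  fixes B :: "(nat \<Rightarrow> 'a::field) set"
  assumes "finite B" "fs.independent B" "\<forall>x\<in>B. \<forall>t\<ge>n. x t = 0"
  shows "\<exists>\<zeta>. \<forall>x\<in>B. \<forall>y\<in>B. fdot n x (\<zeta> y) = (if x = y then 1 else 0)"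
  using assms
proof (induction B rule: finite_induct)
  case empty
  then show ?case by auto
next
  case (insert b B)
  have indB: "fs.independent B" and bspan: "b \<notin> fs.span B"
    using insert.prems(1) insert.hyps(2) by (simp_all add: fs.independent_insert)
  obtain \<zeta> where \<zeta>: "\<forall>x\<in>B. \<forall>y\<in>B. fdot n x (\<zeta> y) = (if x = y then 1 else 0)"
    using insert.IH indB insert.prems(2) by auto
  define c where "c y = fdot n b (\<zeta> y)" for y
  define b' where "b' = b - (\<Sum>y\<in>B. fscale (c y) y)"
  have b'app: "b' s = b s - (\<Sum>y\<in>B. c y * y s)" for s
    unfolding b'_def by (simp add: sum_fun_apply fscale_def)
  have "b' \<noteq> 0"
  proof
    assume "b' = 0"
    then have "b = (\<Sum>y\<in>B. fscale (c y) y)" unfolding b'_def by simp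
    also have "\<dots> \<in> fs.span B"
      by (intro fs.span_sum fs.span_scale fs.span_base)
    finally show False using bspan by simp
  qed
  then obtain t where t: "b' t \<noteq> 0" by (metis ext zero_fun_apply)
  have tn: "t < n"
  proof (rule ccontr)
    assume "\<not> t < n"
    then have "n \<le> t" by simp
    then have "(\<Sum>y\<in>B. c y * y t) = 0" "b t = 0" using insert.prems(2) by (auto intro!: sum.neutral)
    then have "b' t = 0" unfolding b'app by simp
    then show False using t by simp
  qed
  define z where "z s = (if s = t then inverse (b' t) else 0)" for s
  have fz: "fdot n x z = x t * inverse (b' t)" for x
  proof -
    have "fdot n x z = (\<Sum>s<n. if s = t then x t * inverse (b' t) else 0)"
      unfolding fdot_def z_def by (rule sum.cong) auto
    also have "\<dots> = x t * inverse (b' t)" using tn by (subst sum.delta) auto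
    finally show ?thesis .
  qed
  define zb where "zb s = z s - (\<Sum>y\<in>B. fdot n y z * \<zeta> y s)" for s
  define \<zeta>' where "\<zeta>' y = (if y = b then zb else (\<lambda>s. \<zeta> y s - c y * zb s))" for y
  have zbB: "fdot n x zb = 0" if "x \<in> B" for x
  proof -
    have "fdot n x zb = fdot n x z - (\<Sum>y\<in>B. fdot n y z * fdot n x (\<zeta> y))"
      unfolding zb_def by (rule fdot_lin_sum)
    also have "(\<Sum>y\<in>B. fdot n y z * fdot n x (\<zeta> y)) = fdot n x z"
      using \<zeta> that insert.hyps(1) by (simp add: sum_delta_B)
    finally show ?thesis by simp
  qed
  have zbb: "fdot n b zb = 1"
  proof -
    have "fdot n b zb = fdot n b z - (\<Sum>y\<in>B. fdot n y z * fdot n b (\<zeta> y))"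
      unfolding zb_def by (rule fdot_lin_sum)
    also have "\<dots> = b t * inverse (b' t) - (\<Sum>y\<in>B. c y * y t) * inverse (b' t)"
      by (simp add: fz c_def sum_distrib_right mult.commute mult.left_commute sum_distrib_left)
    also have "\<dots> = b' t * inverse (b' t)" by (simp add: b'app left_diff_distrib)
    also have "\<dots> = 1" using t by simp
    finally show ?thesis .
  qed
  show ?case
  proof (intro exI[of _ \<zeta>'] ballI)
    fix x y assume x: "x \<in> insert b B" and y: "y \<in> insert b B"
    show "fdot n x (\<zeta>' y) = (if x = y then 1 else 0)"
    proof (cases "y = b")
      case True
      then show ?thesis using x zbB zbb insert.hyps(2) by (auto simp: \<zeta>'_def)
    next
      case False
      then have yB: "y \<in> B" using y by auto
      have e: "fdot n x (\<zeta>' y) = fdot n x (\<zeta> y) - c y * fdot n x zb"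
        unfolding \<zeta>'_def using False by (simp add: fdot_lin1)
      show ?thesis
      proof (cases "x = b")
        case True
        then show ?thesis using e zbb False by (simp add: c_def)
      next
        case False
        then have "x \<in> B" using x by auto
        then show ?thesis using e zbB \<zeta> yB by simp
      qed
    qed
  qed
qed




lemma of_int_zero_iff: "(of_int x :: 'p::prime_card mod_ring) = 0 \<longleftrightarrow> int CARD('p) dvd x"
  unfolding of_int_of_int_mod_ring by transfer (simp add: mod_eq_0_iff_dvd)

lemma oi_to_int: "of_int (to_int_mod_ring x) = (x :: 'p::prime_card mod_ring)"
  by (simp add: of_int_of_int_mod_ring)

lemma sum_lessThan_add: "(\<Sum>i<x+y. f i) = (\<Sum>i<x. f i) + (\<Sum>i<y. f (x + i))"
  for x y :: nat
proof (induction y)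
  case 0
  then show ?case by simp
next
  case (Suc y)
  then show ?case by (simp add: add.assoc)
qed

theorem lemma2p1:
  fixes p :: nat and \<alpha> n k m :: nat
    and u v :: "nat \<Rightarrow> nat \<Rightarrow> int"
  assumes "prime p" and "CARD('p::prime_card) = p"
    and "\<alpha> > 0" and "k \<le> n"
    and "\<And>i. i < n - k \<Longrightarrow> \<not> (int p ^ \<alpha> dvd idot n (u i) (u i))"
    and "\<And>i j. i < n - k \<Longrightarrow> j < n - k \<Longrightarrow> i \<noteq> j \<Longrightarrow> int p ^ \<alpha> dvd idot n (u i) (u j)"
    and "\<And>i j. i < m \<Longrightarrow> j < m \<Longrightarrow> int p ^ \<alpha> dvd idot n (v i) (v j)"
    and "\<And>i j. i < n - k \<Longrightarrow> j < m \<Longrightarrow> int p ^ \<alpha> dvd idot n (u i) (v j)"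
  shows "2 * vector_space.dim (fscale :: 'p mod_ring \<Rightarrow> _)
           ((\<lambda>j. red_mod n (v j) :: nat \<Rightarrow> 'p mod_ring) ` {..<m}) \<le> k"
proof -
  note pr = assms(1) and card = assms(2) and al = assms(3) and kn = assms(4)
  define r where "r = n - k"
  define G where "G = ((\<lambda>j. red_mod n (v j) :: nat \<Rightarrow> 'p mod_ring) ` {..<m})"
  define d where "d = fs.dim G"
  obtain B where B: "B \<subseteq> G" "fs.independent B" "G \<subseteq> fs.span B"
    using fs.maximal_independent_subset by blast
  have cB: "card B = d" unfolding d_def using fs.basis_card_eq_dim[OF B(1) B(3) B(2)] .
  have fB: "finite B" using B(1) G_def finite_subset by blast
  obtain e where e: "bij_betw e {0..<d} B" using ex_bij_betw_nat_finite[OF fB] cB by metis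
  have "\<forall>j\<in>{0..<d}. \<exists>i. i < m \<and> e j = red_mod n (v i)"
    using e B(1) unfolding G_def bij_betw_def by blast
  then obtain \<sigma> where \<sigma>: "\<And>j. j < d \<Longrightarrow> \<sigma> j < m \<and> e j = red_mod n (v (\<sigma> j))"
    by (metis atLeastLessThan_iff bchoice zero_le)
  have supp: "\<forall>x\<in>B. \<forall>t\<ge>n. x t = 0" using B(1) unfolding G_def red_mod_def by auto
  obtain \<zeta> where \<zeta>: "\<forall>x\<in>B. \<forall>y\<in>B. fdot n x (\<zeta> y) = (if x = y then 1 else 0)"
    using dual_basis[OF fB B(2) supp] by blast
  define V where "V j = v (\<sigma> j)" for j
  define Z where "Z l = (\<lambda>t. to_int_mod_ring (\<zeta> (e l) t))" for l
  have hvz: "int p dvd idot n (V j) (Z l) - (if j = l then 1 else 0)" if "j < d" "l < d" for j l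
  proof -
    have ej: "e j \<in> B" "e l \<in> B" using e that unfolding bij_betw_def by auto
    have "(of_int (idot n (V j) (Z l)) :: 'p mod_ring) = fdot n (e j) (\<zeta> (e l))"
      unfolding idot_def fdot_def V_def Z_def using \<sigma>[OF that(1)]
      by (simp add: red_mod_def oi_to_int)
    also have "\<dots> = (if j = l then 1 else 0)"
      using \<zeta> ej e that unfolding bij_betw_def inj_on_def by auto
    finally have "(of_int (idot n (V j) (Z l) - (if j = l then 1 else 0)) :: 'p mod_ring) = 0"
      by simp
    then show ?thesis unfolding of_int_zero_iff card .
  qed
  have A: "\<forall>a b c. (\<forall>t<n. (\<Sum>i<r. a i * u i t) + (\<Sum>j<d. b j * V j t) + (\<Sum>l<d. c l * Z l t) = 0) \<longrightarrow>
     (\<forall>i<r. a i = 0) \<and> (\<forall>j<d. b j = 0) \<and> (\<forall>l<d. c l = 0)"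
  proof (rule lemmaA[OF pr al])
    show "\<And>i. i < r \<Longrightarrow> \<not> int p ^ \<alpha> dvd idot n (u i) (u i)" using assms(5) r_def by auto
    show "\<And>i j. i < r \<Longrightarrow> j < r \<Longrightarrow> i \<noteq> j \<Longrightarrow> int p ^ \<alpha> dvd idot n (u i) (u j)" using assms(6) r_def by auto
    show "\<And>i j. i < d \<Longrightarrow> j < d \<Longrightarrow> int p ^ \<alpha> dvd idot n (V i) (V j)" using assms(7) \<sigma> V_def by auto
    show "\<And>i j. i < r \<Longrightarrow> j < d \<Longrightarrow> int p ^ \<alpha> dvd idot n (u i) (V j)" using assms(8) \<sigma> V_def r_def by auto
    show "\<And>j l. j < d \<Longrightarrow> l < d \<Longrightarrow> int p dvd idot n (V j) (Z l) - (if j = l then 1 else 0)" by (rule hvz)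
  qed
  have le: "r + d + d \<le> n"
  proof (rule ccontr)
    assume "\<not> r + d + d \<le> n"
    then have "n < card {..<r + d + d}" by simp
    define w where "w i = (if i < r then u i else if i < r + d then V (i - r) else Z (i - r - d))" for i
    obtain a where a: "\<exists>i\<in>{..<r + d + d}. a i \<noteq> 0" "\<forall>t<n. (\<Sum>i\<in>{..<r + d + d}. a i * w i t) = 0"
      using elim_rel[of "{..<r + d + d}" n w] \<open>n < card _\<close> by auto
    have "\<forall>t<n. (\<Sum>i<r. a i * u i t) + (\<Sum>j<d. a (r + j) * V j t) + (\<Sum>l<d. a (r + d + l) * Z l t) = 0"
    proof (intro allI impI)
      fix t assume "t < n"
      have "(\<Sum>i\<in>{..<r + d + d}. a i * w i t) = (\<Sum>i<r. a i * w i t) + (\<Sum>j<d. a (r + j) * w (r + j) t) + (\<Sum>l<d. a (r + d + l) * w (r + d + l) t)"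
        by (simp only: sum_lessThan_add)
      also have "\<dots> = (\<Sum>i<r. a i * u i t) + (\<Sum>j<d. a (r + j) * V j t) + (\<Sum>l<d. a (r + d + l) * Z l t)"
        unfolding w_def by simp
      finally show "(\<Sum>i<r. a i * u i t) + (\<Sum>j<d. a (r + j) * V j t) + (\<Sum>l<d. a (r + d + l) * Z l t) = 0"
        using a(2) \<open>t < n\<close> by simp
    qed
    then have z: "(\<forall>i<r. a i = 0) \<and> (\<forall>j<d. a (r + j) = 0) \<and> (\<forall>l<d. a (r + d + l) = 0)"
      using A[rule_format, of a "\<lambda>j. a (r + j)" "\<lambda>l. a (r + d + l)"] by blast
    obtain i where i: "i < r + d + d" "a i \<noteq> 0" using a(1) by auto
    consider "i < r" | "r \<le> i \<and> i < r + d" | "r + d \<le> i" by linarith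
    then show False
    proof cases
      case 1 then show ?thesis using z i by auto
    next
      case 2
      then have "i - r < d" "r + (i - r) = i" by linarith+
      then show ?thesis using z[THEN conjunct2, THEN conjunct1, rule_format, of "i - r"] i by simp
    next
      case 3
      then have "i - r - d < d" "r + d + (i - r - d) = i" using i by linarith+
      then show ?thesis using z[THEN conjunct2, THEN conjunct2, rule_format, of "i - r - d"] i by simp
    qed
  qed
  show ?thesis using le r_def kn unfolding d_def G_def by simp
qed


end
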